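(* Let $\alpha_a$ be a labeled dGL hybrid game, $S$ an Angelic subvalue map for $\alpha_a$ and $\varphi$ a formula compatible with $S$ (i.e. $\models S(\mathsf{end})\rightarrow\varphi$). Then every state satisfying $\langle\alpha\rangle\varphi$ satisfies $\langle\mathcal{U}(\alpha_a,S)\rangle\varphi$.
   Context: Differential game logic (dGL). Hybrid games are generated by $\alpha,\beta ::= x:=e \mid \alpha;\beta \mid ?Q \mid \{x'=f(x)\,\&\,Q\} \mid \alpha^{*} \mid \alpha\cup\beta \mid x:=* \mid\ !Q \mid \{x'=f(x)\,\&\,Q\}^{d} \mid \alpha^{\times} \mid \alpha\cap\beta \mid x:=\otimes$, with $x$ a real variable (vector for ODEs), $e,f(x)$ polynomial terms, $Q$ a formula. Players Angel and Demon: $x:=e$ deterministic assignment; in $x:=*$ Angel (in $x:=\otimes$ Demon) assigns any real; in $\{x'=f(x)\&Q\}$ Angel (in $\{\cdot\}^d$ Demon) chooses a duration $r\ge 0$ of following the ODE with $Q$ true throughout; $?Q$ makes Angel lose and $!Q$ makes Demon lose if $Q$ is false; in $\alpha\cup\beta$ Angel (in $\alpha\cap\beta$ Demon) chooses the branch; in $\alpha^*$ Angel (in $\alpha^\times$ Demon) decides before each iteration whether to repeat or stop; $\alpha;\beta$ sequential. Formulas: polynomial (in)equalities closed under connectives, real quantifiers, and modalities $\langle\alpha\rangle\varphi$ (Angel can win $\alpha$ reaching $\varphi$) and $[\alpha]\varphi\equiv\neg\langle\alpha\rangle\neg\varphi$, with the standard dGL winning-region semantics ($\langle x:=*\rangle\varphi\leftrightarrow\exists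 x\varphi$, $\langle x:=\otimes\rangle\varphi\leftrightarrow\forall x\varphi$, $\langle ?Q\rangle\varphi\leftrightarrow Q\wedge\varphi$, $\langle !Q\rangle\varphi\leftrightarrow(Q\rightarrow\varphi)$, $\cup$ as disjunction, $\cap$ as conjunction, $\langle\alpha;\beta\rangle\varphi\leftrightarrow\langle\alpha\rangle\langle\beta\rangle\varphi$, Angel ODE existential, Demon ODE universal over durations/solutions staying in $Q$, $\langle\alpha^*\rangle$ least and $\langle\alpha^\times\rangle$ greatest fixed point). $\models$ denotes validity. Labels: every node of the syntax tree carries a unique label; $\alpha_a$ has root label $a$; $\mathrm{nodes}(\alpha_a)$ is its set of subgame labels; $\mathsf{end}$ is a special extra label. A map $S$ assigns formulas to a label set containing $\mathrm{nodes}(\alpha_a)\cup\{\mathsf{end}\}$; $S\{\mathsf{end}\mapsto Q\}$ replaces the value at $\mathsf{end}$. $\gamma_g,\delta_d$ denote immediate subgames with root labels $g,d$. Game suffix: $\mathrm{suffix}_a(\alpha_a)=\alpha_a$; for $b\ne a$: for loops $((\gamma_g)^* )_a,((\gamma_g)^\times)_a$ it is $\mathrm{suffix}_b(\gamma_g);\alpha_a$; for $\cup,\cap$ the suffix within the branch containing $b$; for $(\gamma_g;\delta_d)_a$ it is $\mathrm{suffix}_b(\gamma_g);\delta_d$ if $b\in\mathrm{nodes}(\gamma_g)$ else $\mathrm{suffix}_b(\delta_d)$. An Angelic subvalue map for $\alpha_a$ is a map $S$ with $\models S(b)\rightarrow\langle\mathrm{suffix}_b(\alpha_a)\rangle S(\mathsf{end})$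 for all $b\in\mathrm{nodes}(\alpha_a)$. Universal projection $\mathcal{U}(\alpha_a,S)$: $(x:=* )_a\mapsto (x:=\otimes)_a;\,!S(\mathsf{end})$; $\{x'=f(x)\&Q\}_a\mapsto(\{x'=f(x)\&Q\}^d)_a;\,!S(\mathsf{end})$; $(\gamma_g\cup\delta_d)_a\mapsto(!S(g);\mathcal{U}(\gamma_g,S))\cap(!S(d);\mathcal{U}(\delta_d,S))$; $((\gamma_g)^* )_a\mapsto(!S(g);\mathcal{U}(\gamma_g,S\{\mathsf{end}\mapsto S(a)\}))^{\times};\,!S(\mathsf{end})$; $(\gamma_g;\delta_d)_a\mapsto\mathcal{U}(\gamma_g,S\{\mathsf{end}\mapsto S(d)\});\mathcal{U}(\delta_d,S)$; $(\gamma_g\cap\delta_d)_a\mapsto\mathcal{U}(\gamma_g,S)\cap\mathcal{U}(\delta_d,S)$; $((\gamma_g)^\times)_a\mapsto\mathcal{U}(\gamma_g,S\{\mathsf{end}\mapsto S(a)\})^\times$; $x:=e,x:=\otimes,?Q,!Q,\{x'=f(x)\&Q\}^d$ unchanged (labels preserved, new nodes fresh labels). *)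

theory Defs
  imports Complex_Main
begin

type_synonym var = nat
type_synonym state = "var \<Rightarrow> real"

text \<open>Original labels are arbitrary; labels of nodes newly created by the
  universal projection (or by the game suffix) are built from the label of the node
  being processed, which keeps them fresh.\<close>
datatype lab = Lab nat | Fresh lab nat

datatype key = Nd lab | End

datatype trm = Var var | Const real | Plus trm trm | Times trm trm | Neg trm

primrec trm_sem :: "trm \<Rightarrow> state \<Rightarrow> real" where
  "trm_sem (Var x) \<omega> = \<omega> x"
| "trm_sem (Const c) \<omega> = c"
| "trm_sem (Plus s t) \<omega> = trm_sem s \<omega> + trm_sem t \<omega>"
| "trm_sem (Times s t) \<omega> = trm_sem s \<omega> * trm_sem t \<omega>"
| "trm_sem (Neg s) \<omega> = - trm_sem s \<omega>"

text \<open>Formulas and (labelled) hybrid games; every game node carries a label.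
  An ODE is given as a list of pairs (x, f(x)) meaning x' = f(x).\<close>
datatype fml =
    Geq trm trm | Gt trm trm | Eq trm trm
  | Not fml | And fml fml | Or fml fml | Imp fml fml
  | Exists var fml | Forall var fml
  | Dia game fml | Box game fml
and game =
    Asgn lab var trm
  | AngelAny lab var
  | DemonAny lab var
  | Test lab fml
  | DTest lab fml
  | ODE lab "(var \<times> trm) list" fml
  | DODE lab "(var \<times> trm) list" fml
  | Seq lab game game
  | Choice lab game game
  | DChoice lab game game
  | Star lab game
  | Cross lab game

definition ode_sol :: "(var \<times> trm) list \<Rightarrow> state \<Rightarrow> real \<Rightarrow> (real \<Rightarrow> state) \<Rightarrow> bool" where
  "ode_sol xs \<omega> r \<phi> \<longleftrightarrow> 0 \<le> r \<and> \<phi> 0 = \<omega> \<and>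
     (\<forall>t\<in>{0..r}. \<forall>y. y \<notin> fst ` set xs \<longrightarrow> \<phi> t y = \<omega> y) \<and>
     (\<forall>t\<in>{0..r}. \<forall>(x, f)\<in>set xs.
        ((\<lambda>s. \<phi> s x) has_real_derivative trm_sem f (\<phi> t)) (at t within {0..r}))"

primrec fml_sem :: "fml \<Rightarrow> state set"
and game_sem :: "game \<Rightarrow> state set \<Rightarrow> state set" where
  "fml_sem (Geq s t) = {\<omega>. trm_sem s \<omega> \<ge> trm_sem t \<omega>}"
| "fml_sem (Gt s t) = {\<omega>. trm_sem s \<omega> > trm_sem t \<omega>}"
| "fml_sem (Eq s t) = {\<omega>. trm_sem s \<omega> = trm_sem t \<omega>}"
| "fml_sem (Not p) = - fml_sem p"
| "fml_sem (And p q) = fml_sem p \<inter> fml_sem q"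
| "fml_sem (Or p q) = fml_sem p \<union> fml_sem q"
| "fml_sem (Imp p q) = - fml_sem p \<union> fml_sem q"
| "fml_sem (Exists x p) = {\<omega>. \<exists>v. \<omega>(x := v) \<in> fml_sem p}"
| "fml_sem (Forall x p) = {\<omega>. \<forall>v. \<omega>(x := v) \<in> fml_sem p}"
| "fml_sem (Dia g p) = game_sem g (fml_sem p)"
| "fml_sem (Box g p) = - game_sem g (- fml_sem p)"
| "game_sem (Asgn l x e) X = {\<omega>. \<omega>(x := trm_sem e \<omega>) \<in> X}"
| "game_sem (AngelAny l x) X = {\<omega>. \<exists>v. \<omega>(x := v) \<in> X}"
| "game_sem (DemonAny l x) X = {\<omega>. \<forall>v. \<omega>(x := v) \<in> X}"
| "game_sem (Test l q) X = fml_sem q \<inter> X"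
| "game_sem (DTest l q) X = - fml_sem q \<union> X"
| "game_sem (ODE l xs q) X = {\<omega>. \<exists>r \<phi>. ode_sol xs \<omega> r \<phi> \<and>
      (\<forall>t\<in>{0..r}. \<phi> t \<in> fml_sem q) \<and> \<phi> r \<in> X}"
| "game_sem (DODE l xs q) X = {\<omega>. \<forall>r \<phi>. ode_sol xs \<omega> r \<phi> \<and>
      (\<forall>t\<in>{0..r}. \<phi> t \<in> fml_sem q) \<longrightarrow> \<phi> r \<in> X}"
| "game_sem (Seq l g h) X = game_sem g (game_sem h X)"
| "game_sem (Choice l g h) X = game_sem g X \<union> game_sem h X"
| "game_sem (DChoice l g h) X = game_sem g X \<inter> game_sem h X"
| "game_sem (Star l g) X = lfp (\<lambda>Z. X \<union> game_sem g Z)"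
| "game_sem (Cross l g) X = gfp (\<lambda>Z. X \<inter> game_sem g Z)"

definition valid :: "fml \<Rightarrow> bool" where
  "valid p \<longleftrightarrow> (\<forall>\<omega>. \<omega> \<in> fml_sem p)"

fun root :: "game \<Rightarrow> lab" where
  "root (Asgn l _ _) = l" | "root (AngelAny l _) = l" | "root (DemonAny l _) = l"
| "root (Test l _) = l" | "root (DTest l _) = l" | "root (ODE l _ _) = l"
| "root (DODE l _ _) = l" | "root (Seq l _ _) = l" | "root (Choice l _ _) = l"
| "root (DChoice l _ _) = l" | "root (Star l _) = l" | "root (Cross l _) = l"

text \<open>List of labels of all subgame nodes (subgames only, not games nested in formulas).\<close>
fun labels :: "game \<Rightarrow> lab list" where
  "labels (Seq l g h) = l # labels g @ labels h"
| "labels (Choice l g h) = l # labels g @ labels h"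
| "labels (DChoice l g h) = l # labels g @ labels h"
| "labels (Star l g) = l # labels g"
| "labels (Cross l g) = l # labels g"
| "labels g = [root g]"

definition nodes :: "game \<Rightarrow> lab set" where
  "nodes g = set (labels g)"

text \<open>Game suffix suffix_b(\<alpha>_a) (only meaningful for b \<in> nodes \<alpha>_a).\<close>
fun suffix :: "lab \<Rightarrow> game \<Rightarrow> game" where
  "suffix b (Star a g) = (if b = a then Star a g else Seq (Fresh a 0) (suffix b g) (Star a g))"
| "suffix b (Cross a g) = (if b = a then Cross a g else Seq (Fresh a 0) (suffix b g) (Cross a g))"
| "suffix b (Choice a g h) = (if b = a then Choice a g h
     else if b \<in> set (labels g) then suffix b g else suffix b h)"
| "suffix b (DChoice a g h) = (if b = a then DChoice a g h
     else if b \<in> set (labels g) then suffix b g else suffix b h)"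
| "suffix b (Seq a g h) = (if b = a then Seq a g h
     else if b \<in> set (labels g) then Seq (Fresh a 0) (suffix b g) h else suffix b h)"
| "suffix b g = g"

definition angelic_subvalue :: "game \<Rightarrow> (key \<Rightarrow> fml) \<Rightarrow> bool" where
  "angelic_subvalue \<alpha> S \<longleftrightarrow>
     (\<forall>b\<in>nodes \<alpha>. valid (Imp (S (Nd b)) (Dia (suffix b \<alpha>) (S End))))"

fun uproj :: "game \<Rightarrow> (key \<Rightarrow> fml) \<Rightarrow> game" where
  "uproj (AngelAny a x) S = Seq (Fresh a 0) (DemonAny a x) (DTest (Fresh a 1) (S End))"
| "uproj (ODE a xs q) S = Seq (Fresh a 0) (DODE a xs q) (DTest (Fresh a 1) (S End))"
| "uproj (Choice a g h) S =
     DChoice a (Seq (Fresh a 0) (DTest (Fresh a 1) (S (Nd (root g)))) (uproj g S))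
               (Seq (Fresh a 2) (DTest (Fresh a 3) (S (Nd (root h)))) (uproj h S))"
| "uproj (Star a g) S =
     Seq (Fresh a 0)
       (Cross a (Seq (Fresh a 1) (DTest (Fresh a 2) (S (Nd (root g))))
                   (uproj g (S(End := S (Nd a))))))
       (DTest (Fresh a 3) (S End))"
| "uproj (Seq a g h) S = Seq a (uproj g (S(End := S (Nd (root h))))) (uproj h S)"
| "uproj (DChoice a g h) S = DChoice a (uproj g S) (uproj h S)"
| "uproj (Cross a g) S = Cross a (uproj g (S(End := S (Nd a))))"
| "uproj g S = g"

end

theory Submission
  imports Defs
begin

lemma game_mono: "X \<subseteq> Y \<Longrightarrow> game_sem g X \<subseteq> game_sem g Y"
proof (induction g arbitrary: X Y rule: game.induct[of "\<lambda>_. True"])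
  case (Star l g)
  then show ?case by (auto intro!: lfp_mono)
next
  case (Cross l g)
  then show ?case by (auto intro!: gfp_mono)
next
  case (Seq l g h)
  then have "game_sem h X \<subseteq> game_sem h Y" by blast
  then show ?case using Seq.IH(1) by simp
next
  case (Choice l g h)
  then have "game_sem g X \<subseteq> game_sem g Y" "game_sem h X \<subseteq> game_sem h Y" by blast+
  then show ?case by auto
next
  case (DChoice l g h)
  then have "game_sem g X \<subseteq> game_sem g Y" "game_sem h X \<subseteq> game_sem h Y" by blast+
  then show ?case by auto
next
  case (ODE l xs q)
  then show ?case by auto
next
  case (DODE l xs q)
  then show ?case by auto
qed auto

lemma root_in: "root g \<in> set (labels g)"
  by (cases g) auto

lemma suffix_root: "suffix (root g) g = g"
  by (cases g) auto

lemma gen: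
  "distinct (labels b) \<Longrightarrow>
   (\<forall>c\<in>set (labels b). fml_sem (S (Nd c)) \<subseteq> game_sem (suffix c b) E) \<Longrightarrow>
   fml_sem (S End) \<subseteq> P \<Longrightarrow> E \<subseteq> P \<Longrightarrow>
   game_sem b P \<subseteq> game_sem (uproj b S) P"
proof (induction b arbitrary: S E P rule: game.induct[of "\<lambda>_. True"])
  case (AngelAny l x)
  then show ?case by auto
next
  case (ODE l xs q)
  then show ?case by auto
next
  case (Choice a g h)
  have dg: "distinct (labels g)" and dh: "distinct (labels h)"
    and ag: "a \<notin> set (labels g)" and ah: "a \<notin> set (labels h)"
    and gh: "set (labels g) \<inter> set (labels h) = {}" using Choice.prems(1) by auto
  have sg: "\<forall>c\<in>set (labels g). fml_sem (S (Nd c)) \<subseteq> game_sem (suffix c g) E"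
  proof
    fix c assume c: "c \<in> set (labels g)"
    then have cc: "c \<noteq> a" using ag by auto
    moreover have "fml_sem (S (Nd c)) \<subseteq> game_sem (suffix c (Choice a g h)) E" using Choice.prems(2) c by simp
    ultimately show "fml_sem (S (Nd c)) \<subseteq> game_sem (suffix c g) E" using c by simp
  qed
  have sh: "\<forall>c\<in>set (labels h). fml_sem (S (Nd c)) \<subseteq> game_sem (suffix c h) E"
  proof
    fix c assume c: "c \<in> set (labels h)"
    then have cc: "c \<noteq> a" "c \<notin> set (labels g)" using ah gh by auto
    moreover have "fml_sem (S (Nd c)) \<subseteq> game_sem (suffix c (Choice a g h)) E" using Choice.prems(2) c by simp
    ultimately show "fml_sem (S (Nd c)) \<subseteq> game_sem (suffix c h) E" using c by simp
  qed
  have ig: "game_sem g P \<subseteq> game_sem (uproj g S) P"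
    using Choice.IH(1)[OF dg sg Choice.prems(3,4)] .
  have ih: "game_sem h P \<subseteq> game_sem (uproj h S) P"
    using Choice.IH(2)[OF dh sh Choice.prems(3,4)] .
  have rg: "fml_sem (S (Nd (root g))) \<subseteq> game_sem g P"
    using bspec[OF sg root_in[of g]] suffix_root[of g] game_mono[OF Choice.prems(4), of g] by auto
  have rh: "fml_sem (S (Nd (root h))) \<subseteq> game_sem h P"
    using bspec[OF sh root_in[of h]] suffix_root[of h] game_mono[OF Choice.prems(4), of h] by auto
  show ?case using ig ih rg rh by auto
next
  case (DChoice a g h)
  have dg: "distinct (labels g)" and dh: "distinct (labels h)"
    and ag: "a \<notin> set (labels g)" and ah: "a \<notin> set (labels h)"
    and gh: "set (labels g) \<inter> set (labels h) = {}" using DChoice.prems(1) by auto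
  have sg: "\<forall>c\<in>set (labels g). fml_sem (S (Nd c)) \<subseteq> game_sem (suffix c g) E"
  proof
    fix c assume c: "c \<in> set (labels g)"
    then have cc: "c \<noteq> a" using ag by auto
    moreover have "fml_sem (S (Nd c)) \<subseteq> game_sem (suffix c (DChoice a g h)) E" using DChoice.prems(2) c by simp
    ultimately show "fml_sem (S (Nd c)) \<subseteq> game_sem (suffix c g) E" using c by simp
  qed
  have sh: "\<forall>c\<in>set (labels h). fml_sem (S (Nd c)) \<subseteq> game_sem (suffix c h) E"
  proof
    fix c assume c: "c \<in> set (labels h)"
    then have cc: "c \<noteq> a" "c \<notin> set (labels g)" using ah gh by auto
    moreover have "fml_sem (S (Nd c)) \<subseteq> game_sem (suffix c (DChoice a g h)) E" using DChoice.prems(2) c by simp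
    ultimately show "fml_sem (S (Nd c)) \<subseteq> game_sem (suffix c h) E" using c by simp
  qed
  have ig: "game_sem g P \<subseteq> game_sem (uproj g S) P"
    using DChoice.IH(1)[OF dg sg DChoice.prems(3,4)] .
  have ih: "game_sem h P \<subseteq> game_sem (uproj h S) P"
    using DChoice.IH(2)[OF dh sh DChoice.prems(3,4)] .
  show ?case using ig ih by auto
next
  case (Seq a g h)
  have dg: "distinct (labels g)" and dh: "distinct (labels h)"
    and ag: "a \<notin> set (labels g)" and ah: "a \<notin> set (labels h)"
    and gh: "set (labels g) \<inter> set (labels h) = {}" using Seq.prems(1) by auto
  define S' where "S' = S(End := S (Nd (root h)))"
  have sh: "\<forall>c\<in>set (labels h). fml_sem (S (Nd c)) \<subseteq> game_sem (suffix c h) E"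
  proof
    fix c assume c: "c \<in> set (labels h)"
    then have cc: "c \<noteq> a" "c \<notin> set (labels g)" using ah gh by auto
    moreover have "fml_sem (S (Nd c)) \<subseteq> game_sem (suffix c (Seq a g h)) E" using Seq.prems(2) c by simp
    ultimately show "fml_sem (S (Nd c)) \<subseteq> game_sem (suffix c h) E" using c by simp
  qed
  have ih: "game_sem h P \<subseteq> game_sem (uproj h S) P"
    using Seq.IH(2)[OF dh sh Seq.prems(3,4)] .
  have sg: "\<forall>c\<in>set (labels g). fml_sem (S' (Nd c)) \<subseteq> game_sem (suffix c g) (game_sem h E)"
  proof
    fix c assume c: "c \<in> set (labels g)"
    then have cc: "c \<noteq> a" using ag by auto
    moreover have "fml_sem (S (Nd c)) \<subseteq> game_sem (suffix c (Seq a g h)) E" using Seq.prems(2) c by simp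
    ultimately show "fml_sem (S' (Nd c)) \<subseteq> game_sem (suffix c g) (game_sem h E)" using c unfolding S'_def by simp
  qed
  have hE: "game_sem h E \<subseteq> game_sem (uproj h S) P"
    using game_mono[OF Seq.prems(4), of h] ih by auto
  have rh: "fml_sem (S' End) \<subseteq> game_sem (uproj h S) P"
    using bspec[OF sh root_in[of h]] suffix_root[of h] hE unfolding S'_def by auto
  have ig: "game_sem g (game_sem (uproj h S) P) \<subseteq> game_sem (uproj g S') (game_sem (uproj h S) P)"
    using Seq.IH(1)[OF dg sg rh hE] .
  have "game_sem g (game_sem h P) \<subseteq> game_sem g (game_sem (uproj h S) P)"
    using game_mono[OF ih] .
  then show ?case using ig unfolding S'_def by auto
next
  case (Star a g)
  have dg: "distinct (labels g)" and ag: "a \<notin> set (labels g)" using Star.prems(1) by auto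
  define S' where "S' = S(End := S (Nd a))"
  have sg: "\<forall>c\<in>set (labels g). fml_sem (S' (Nd c)) \<subseteq> game_sem (suffix c g) (game_sem (Star a g) E)"
  proof
    fix c assume c: "c \<in> set (labels g)"
    then have cc: "c \<noteq> a" using ag by auto
    moreover have "fml_sem (S (Nd c)) \<subseteq> game_sem (suffix c (Star a g)) E" using Star.prems(2) c by simp
    ultimately show "fml_sem (S' (Nd c)) \<subseteq> game_sem (suffix c g) (game_sem (Star a g) E)" using c unfolding S'_def by simp
  qed
  have ig: "game_sem g UNIV \<subseteq> game_sem (uproj g S') UNIV"
    using Star.IH[OF dg sg] by auto
  have rg: "fml_sem (S (Nd (root g))) \<subseteq> game_sem g UNIV"
    using bspec[OF sg root_in[of g]] suffix_root[of g] game_mono[of _ UNIV g] unfolding S'_def by fastforce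
  define body where "body = Seq (Fresh a 1) (DTest (Fresh a 2) (S (Nd (root g)))) (uproj g S')"
  have "UNIV \<subseteq> UNIV \<inter> game_sem body UNIV" unfolding body_def using ig rg by auto
  then have "UNIV \<subseteq> gfp (\<lambda>Z. UNIV \<inter> game_sem body Z)" by (rule gfp_upperbound)
  moreover have "- fml_sem (S End) \<union> P = UNIV" using Star.prems(3) by auto
  ultimately show ?case unfolding body_def S'_def by (simp add: subset_eq)
next
  case (Cross a g)
  have dg: "distinct (labels g)" and ag: "a \<notin> set (labels g)" using Cross.prems(1) by auto
  define S' where "S' = S(End := S (Nd a))"
  define G where "G = game_sem (Cross a g) P"
  have sg: "\<forall>c\<in>set (labels g). fml_sem (S' (Nd c)) \<subseteq> game_sem (suffix c g) (game_sem (Cross a g) E)"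
  proof
    fix c assume c: "c \<in> set (labels g)"
    then have cc: "c \<noteq> a" using ag by auto
    moreover have "fml_sem (S (Nd c)) \<subseteq> game_sem (suffix c (Cross a g)) E" using Cross.prems(2) c by simp
    ultimately show "fml_sem (S' (Nd c)) \<subseteq> game_sem (suffix c g) (game_sem (Cross a g) E)" using c unfolding S'_def by simp
  qed
  have EG: "game_sem (Cross a g) E \<subseteq> G" unfolding G_def using game_mono[OF Cross.prems(4)] .
  have aG: "fml_sem (S' End) \<subseteq> G" using Cross.prems(2) EG unfolding S'_def by auto
  have ig: "game_sem g G \<subseteq> game_sem (uproj g S') G"
    using Cross.IH[OF dg sg aG EG] .
  have mo: "mono (\<lambda>Z. P \<inter> game_sem g Z)"
    by (rule monoI) (use game_mono in blast)
  have "G = P \<inter> game_sem g G" unfolding G_def using gfp_unfold[OF mo] by simp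
  then have "G \<subseteq> P \<inter> game_sem (uproj g S') G" using ig by blast
  then have "G \<subseteq> gfp (\<lambda>Z. P \<inter> game_sem (uproj g S') Z)" by (rule gfp_upperbound)
  then show ?case unfolding G_def S'_def by simp
qed auto

theorem mainTheorem8:
  fixes \<alpha> :: game and S :: "key \<Rightarrow> fml" and \<phi> :: fml
  assumes "distinct (labels \<alpha>)"
    and "angelic_subvalue \<alpha> S"
    and "valid (Imp (S End) \<phi>)"
  shows "\<forall>\<omega>. \<omega> \<in> fml_sem (Dia \<alpha> \<phi>) \<longrightarrow> \<omega> \<in> fml_sem (Dia (uproj \<alpha> S) \<phi>)"
proof -
  have 1: "\<forall>c\<in>set (labels \<alpha>). fml_sem (S (Nd c)) \<subseteq> game_sem (suffix c \<alpha>) (fml_sem (S End))"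
    using assms(2) unfolding angelic_subvalue_def valid_def nodes_def by auto
  have 2: "fml_sem (S End) \<subseteq> fml_sem \<phi>" using assms(3) unfolding valid_def by auto
  show ?thesis using gen[OF assms(1) 1 2 2] by auto
qed

end
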